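(* Let $A=[0,+\infty)^n$ and let $\mathcal{O}$ be a bounded open neighbourhood of the origin in $\mathbb{R}^n$. There is no continuous map $F:\partial\mathcal{O}\cap A\to A$ such that $F(\partial\mathcal{O}\cap A)\subset\partial A\setminus\{0\}$ and such that, for every $j=1,\dots,n$ and every $x=(x_1,\dots,x_n)\in\partial\mathcal{O}\cap A$, $x_j=0$ implies $F_j(x)=0$, where $F_j$ denotes the $j$-th component of $F$.
   Context: $\partial A$ is the boundary of $A$ in $\mathbb{R}^n$, i.e. the set of points of $A$ having at least one zero coordinate. *)

theory Defs
  imports "HOL-Analysis.Analysis"
begin

definition orthant :: "(real ^ 'n) set" where
  "orthant = {x. \<forall>i. 0 \<le> x $ i}"

text \<open>Its boundary in R^n: points of A with at least one zero coordinate.\<close>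
definition orthant_boundary :: "(real ^ 'n) set" where
  "orthant_boundary = {x \<in> orthant. \<exists>i. x $ i = 0}"

end

theory Submission
  imports Defs
begin

definition absv :: "real ^ 'n \<Rightarrow> real ^ 'n" where
  "absv x = (\<chi> i. \<bar>x $ i\<bar>)"

lemma absv_cont: "continuous_on S absv"
  unfolding absv_def by (intro continuous_intros)

lemma norm_absv: "norm (absv x) = norm x"
  by (simp add: absv_def norm_vec_def)

theorem lemma3p1:
  fixes U :: "(real ^ 'n) set"
  assumes "open U" and "bounded U" and "0 \<in> U"
  shows "\<not> (\<exists>F :: real ^ 'n \<Rightarrow> real ^ 'n.
              continuous_on (frontier U \<inter> orthant) F \<and>
              F ` (frontier U \<inter> orthant) \<subseteq> orthant_boundary - {0} \<and>
              (\<forall>j. \<forall>x \<in> frontier U \<inter> orthant. x $ j = 0 \<longrightarrow> F x $ j = 0))"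
proof
  assume "\<exists>F :: real ^ 'n \<Rightarrow> real ^ 'n.
              continuous_on (frontier U \<inter> orthant) F \<and>
              F ` (frontier U \<inter> orthant) \<subseteq> orthant_boundary - {0} \<and>
              (\<forall>j. \<forall>x \<in> frontier U \<inter> orthant. x $ j = 0 \<longrightarrow> F x $ j = 0)"
  then obtain F :: "real ^ 'n \<Rightarrow> real ^ 'n" where
    Fc: "continuous_on (frontier U \<inter> orthant) F" and
    Fim: "F ` (frontier U \<inter> orthant) \<subseteq> orthant_boundary - {0}" and
    Fz: "\<And>j x. x \<in> frontier U \<inter> orthant \<Longrightarrow> x $ j = 0 \<Longrightarrow> F x $ j = 0"
    by blast
  define W where "W = absv -` U"
  have oW: "open W" unfolding W_def
    using open_vimage[OF \<open>open U\<close>, of absv] absv_cont by blast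
  have W0: "0 \<in> W" proof -
    have "absv (0::real^'n) = 0" by (simp add: absv_def vec_eq_iff)
    then show ?thesis using assms(3) by (simp add: W_def)
  qed
  have bW: "bounded W"
  proof -
    obtain B where "\<forall>y\<in>U. norm y \<le> B" using \<open>bounded U\<close> bounded_iff by blast
    then have "\<forall>x\<in>W. norm x \<le> B" by (metis W_def norm_absv vimageE)
    then show ?thesis using bounded_iff by blast
  qed
  have absorth: "absv x \<in> orthant" for x
    by (simp add: orthant_def absv_def)
  have frW: "absv x \<in> frontier U \<inter> orthant" if "x \<in> frontier W" for x
  proof -
    have "closed (absv -` closure U)"
      by (rule closed_vimage) (auto simp: absv_cont)
    moreover have "W \<subseteq> absv -` closure U" using closure_subset by (auto simp: W_def)
    ultimately have "closure W \<subseteq> absv -` closure U" by (simp add: closure_minimal)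
    moreover have "x \<in> closure W" "x \<notin> W"
      using that oW by (auto simp: frontier_def interior_open)
    ultimately show ?thesis using \<open>open U\<close> absorth
      by (auto simp: frontier_def interior_open W_def)
  qed
  define H where "H x = (\<chi> j. x $ j * F (absv x) $ j)" for x
  have Fnn: "0 \<le> F (absv x) $ j" if "x \<in> frontier W" for x j
    using Fim frW[OF that] by (auto simp: orthant_boundary_def orthant_def)
  have Fhas0: "\<exists>j. F (absv x) $ j = 0" if "x \<in> frontier W" for x
    using Fim frW[OF that] by (auto simp: orthant_boundary_def orthant_def)
  have Fne: "F (absv x) \<noteq> 0" if "x \<in> frontier W" for x
    using Fim frW[OF that] by auto
  have x0: "x \<noteq> 0" if "x \<in> frontier W" for x
    using that W0 oW by (auto simp: frontier_def interior_open)
  have compW: "compact (frontier W)" using bW by (simp add: compact_frontier_bounded)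
  have contH: "continuous_on (frontier W) H"
  proof -
    have "continuous_on (frontier W) (F \<circ> absv)"
      by (rule continuous_on_compose[OF absv_cont continuous_on_subset[OF Fc]]) (use frW in auto)
    then show ?thesis unfolding H_def
      by (intro continuous_intros) (auto simp: o_def)
  qed
  define v :: "real ^ 'n" where "v = (\<chi> i. 1)"
  have h1: "homotopic_with_canon (\<lambda>x. True) (frontier W) (- {0}) (\<lambda>x. x) H"
  proof (rule homotopic_with_linear[OF continuous_on_id contH])
    fix x assume xf: "x \<in> frontier W"
    show "closed_segment x (H x) \<subseteq> - {0}"
    proof
      fix z assume "z \<in> closed_segment x (H x)"
      then obtain t where t: "0 \<le> t" "t \<le> 1" "z = (1 - t) *\<^sub>R x + t *\<^sub>R H x"
        by (auto simp: closed_segment_def)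
      show "z \<in> - {0}"
      proof
        assume "z \<in> {0}"
        then have zc: "\<And>j. x $ j * ((1 - t) + t * F (absv x) $ j) = 0"
          using t by (auto simp: vec_eq_iff H_def algebra_simps)
        show False
        proof (cases "t = 1")
          case True
          obtain j where "F (absv x) $ j \<noteq> 0" using Fne[OF xf] by (auto simp: vec_eq_iff)
          moreover have "x $ j \<noteq> 0"
          proof
            assume "x $ j = 0"
            then have "absv x $ j = 0" by (simp add: absv_def)
            then show False using Fz[OF frW[OF xf]] calculation by blast
          qed
          ultimately show False using zc[of j] True by simp
        next
          case False
          have "x $ j = 0" for j
          proof -
            have "(1 - t) + t * F (absv x) $ j > 0"
              using False t Fnn[OF xf, of j] by (smt (verit) mult_nonneg_nonneg)
            then show ?thesis using zc[of j] by simp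
          qed
          then show False using x0[OF xf] by (auto simp: vec_eq_iff)
        qed
      qed
    qed
  qed
  have h2: "homotopic_with_canon (\<lambda>x. True) (frontier W) (- {0}) H (\<lambda>x. - v)"
  proof (rule homotopic_with_linear[OF contH continuous_on_const])
    fix x assume xf: "x \<in> frontier W"
    obtain j where j: "F (absv x) $ j = 0" using Fhas0[OF xf] by blast
    then have Hj: "H x $ j = 0" by (simp add: H_def)
    show "closed_segment (H x) (- v) \<subseteq> - {0}"
    proof
      fix z assume "z \<in> closed_segment (H x) (- v)"
      then obtain t where t: "0 \<le> t" "t \<le> 1" "z = (1 - t) *\<^sub>R H x + t *\<^sub>R (- v)"
        by (auto simp: closed_segment_def)
      show "z \<in> - {0}"
      proof
        assume "z \<in> {0}"
        then have "z $ j = 0" by simp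
        then have "t = 0" using t Hj by (simp add: v_def)
        then have "H x = 0" using t \<open>z \<in> {0}\<close> by simp
        moreover obtain k where "F (absv x) $ k \<noteq> 0" using Fne[OF xf] by (auto simp: vec_eq_iff)
        moreover have "x $ k \<noteq> 0"
        proof
          assume "x $ k = 0"
          then have "absv x $ k = 0" by (simp add: absv_def)
          then show False using Fz[OF frW[OF xf]] calculation by blast
        qed
        ultimately show False by (auto simp: vec_eq_iff H_def)
      qed
    qed
  qed
  have h3: "homotopic_with_canon (\<lambda>x. True) (frontier W) (- {0}) (\<lambda>x. x) (\<lambda>x. - v)"
    using homotopic_with_trans[OF h1 h2] .
  define nz where "nz y = inverse (norm y) *\<^sub>R y" for y :: "real ^ 'n"
  have "homotopic_with_canon (\<lambda>x. True) (frontier W) (sphere 0 1) (nz \<circ> (\<lambda>x. x)) (nz \<circ> (\<lambda>x. - v))"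
  proof (rule homotopic_with_compose_continuous_left)
    show "homotopic_with_canon (\<lambda>f. True) (frontier W) (- {0}) (\<lambda>x. x) (\<lambda>x. - v)" using h3 .
    show "continuous_on (- {0}) nz" unfolding nz_def by (intro continuous_intros) auto
    show "nz \<in> - {0} \<rightarrow> sphere 0 1" by (auto simp: nz_def)
  qed
  then have "\<exists>c. homotopic_with_canon (\<lambda>x. True) (frontier W) (sphere 0 1)
                               (\<lambda>x. inverse(norm(x - 0)) *\<^sub>R (x - 0)) (\<lambda>x. c)"
    by (auto simp: nz_def o_def)
  moreover have "0 \<notin> frontier W" using x0 by blast
  moreover have "bounded (connected_component_set (- frontier W) 0)"
  proof -
    have "connected_component_set (- frontier W) 0 \<subseteq> W"
    proof (rule ccontr)
      let ?C = "connected_component_set (- frontier W) 0"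
      assume "\<not> ?C \<subseteq> W"
      then have "?C - W \<noteq> {}" by blast
      moreover have "?C \<inter> W \<noteq> {}" using W0 \<open>0 \<notin> frontier W\<close>
        proof -
        have "0 \<in> ?C" using \<open>0 \<notin> frontier W\<close> by simp
        then show ?thesis using W0 by blast
      qed
      ultimately have "?C \<inter> frontier W \<noteq> {}"
        using connected_Int_frontier connected_connected_component by blast
      then show False using connected_component_subset by blast
    qed
    then show ?thesis using bW bounded_subset by blast
  qed
  ultimately show False
    using Borsuk_map_essential_bounded_component[OF compW] by blast
qed

end
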